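(* Fix $R\in\mathbb R$ and $t_1<t_2$. For all $\xi,\zeta\in\mathbb R$ and $u,v\le0$, $$\int_{\mathbb R_-}du\,\Phi^\xi_{t_1}(u)T^0_{t_1,t_2}(u,v)=\Phi^\xi_{t_2}(v),\qquad\int_{\mathbb R_-}dv\,T^0_{t_1,t_2}(u,v)\Psi^\zeta_{t_2}(v)=\Psi^\zeta_{t_1}(u).$$
   Context: $\operatorname{Ai}^{(s)}(x)=e^{2s^3/3+xs}\operatorname{Ai}(s^2+x)$; $\Phi_t^\xi(u)=\operatorname{Ai}^{(t)}(R+\xi+u)-\operatorname{Ai}^{(t)}(R+\xi-u)$; $\Psi_t^\zeta(u)=\operatorname{Ai}^{(-t)}(R+\zeta+u)-\operatorname{Ai}^{(-t)}(R+\zeta-u)$. $T^0_{t_1,t_2}(u,v)=\phi_{t_2-t_1}(u,v)-\phi_{t_2-t_1}(u,-v)$ for $u,v\le0$, with $\phi_t(x,y)=(4\pi t)^{-1/2}e^{-(x-y)^2/(4t)}$; this is the transition density of a Brownian motion with diffusion coefficient 2 killed when it exceeds level $0$. *)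

theory Defs
  imports "HOL-Analysis.Analysis"
begin

text \<open>Airy function, via its standard (conditionally convergent) integral representation
  Ai(x) = (1/pi) * lim_{b -> oo} int_0^b cos(t^3/3 + x t) dt.\<close>
definition Airy :: "real \<Rightarrow> real" where
  "Airy x = Lim at_top (\<lambda>b::real. (1/pi) * integral {0..b} (\<lambda>t. cos (t^3/3 + x*t)))"

definition Airy_shift :: "real \<Rightarrow> real \<Rightarrow> real" where
  "Airy_shift s x = exp (2 * s^3 / 3 + x * s) * Airy (s^2 + x)"

definition Phi :: "real \<Rightarrow> real \<Rightarrow> real \<Rightarrow> real \<Rightarrow> real" where
  "Phi R t \<xi> u = Airy_shift t (R + \<xi> + u) - Airy_shift t (R + \<xi> - u)"

definition Psi :: "real \<Rightarrow> real \<Rightarrow> real \<Rightarrow> real \<Rightarrow> real" where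
  "Psi R t \<zeta> u = Airy_shift (-t) (R + \<zeta> + u) - Airy_shift (-t) (R + \<zeta> - u)"

text \<open>Heat kernel with diffusion coefficient 2.\<close>
definition heat :: "real \<Rightarrow> real \<Rightarrow> real \<Rightarrow> real" where
  "heat t x y = exp (- ((x - y)^2) / (4 * t)) / sqrt (4 * pi * t)"

text \<open>Killed transition density T^0_{t1,t2}(u,v), for u, v <= 0.\<close>
definition T0 :: "real \<Rightarrow> real \<Rightarrow> real \<Rightarrow> real \<Rightarrow> real" where
  "T0 t1 t2 u v = heat (t2 - t1) u v - heat (t2 - t1) u (-v)"

end

theory Submission
  imports Defs "HOL-Complex_Analysis.Complex_Analysis" "HOL-Probability.Probability"
begin

lemma rect_cauchy:
  fixes f :: "complex \<Rightarrow> complex"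
  assumes hol: "f holomorphic_on UNIV" and ab: "a < b" and c: "0 < c"
  shows "integral {a..b} (\<lambda>t. f (of_real t)) - integral {a..b} (\<lambda>t. f (Complex t c))
     = \<i> * integral {0..c} (\<lambda>y. f (Complex a y)) - \<i> * integral {0..c} (\<lambda>y. f (Complex b y))"
proof -
  define A where "A = Complex a 0"
  define B where "B = Complex b 0"
  define C where "C = Complex b c"
  define D where "D = Complex a c"
  have cont: "continuous_on UNIV f" using hol holomorphic_on_imp_continuous_on by blast
  have ci: "f contour_integrable_on linepath p q" for p q
    by (rule contour_integrable_continuous_linepath) (use cont continuous_on_subset in blast)
  let ?g = "linepath A B +++ linepath B C +++ linepath C D +++ linepath D A"
  have "(f has_contour_integral 0) ?g"
    by (rule Cauchy_theorem_convex_simple[OF hol]) auto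
  hence "contour_integral ?g f = 0" by (rule contour_integral_unique)
  moreover have "contour_integral ?g f = contour_integral (linepath A B) f + contour_integral (linepath B C) f
     + contour_integral (linepath C D) f + contour_integral (linepath D A) f"
    by (simp add: contour_integral_join ci valid_path_join add.assoc)
  moreover have "contour_integral (linepath A B) f = integral {a..b} (\<lambda>t. f (of_real t))"
    using ab by (subst contour_integral_linepath_Reals_eq) (auto simp: A_def B_def complex_is_Real_iff)
  moreover have "contour_integral (linepath B C) f = \<i> * integral {0..c} (\<lambda>y. f (Complex b y))"
  proof -
    have "(f has_contour_integral contour_integral (linepath B C) f) (linepath B C)"
      using ci has_contour_integral_integral by blast
    hence "((\<lambda>x. f (Complex b x)) has_integral (-\<i> * contour_integral (linepath B C) f)) {0..c}"
      using c by (subst (asm) has_contour_integral_linepath_same_Re_iff[where c=b and a=0 and b=c]) (auto simp: B_def C_def)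
    hence "integral {0..c} (\<lambda>y. f (Complex b y)) = -\<i> * contour_integral (linepath B C) f"
      by (rule integral_unique)
    thus ?thesis by simp
  qed
  moreover have "contour_integral (linepath D A) f = - (\<i> * integral {0..c} (\<lambda>y. f (Complex a y)))"
  proof -
    have "(f has_contour_integral contour_integral (linepath A D) f) (linepath A D)"
      using ci has_contour_integral_integral by blast
    hence "((\<lambda>x. f (Complex a x)) has_integral (-\<i> * contour_integral (linepath A D) f)) {0..c}"
      using c by (subst (asm) has_contour_integral_linepath_same_Re_iff[where c=a and a=0 and b=c]) (auto simp: A_def D_def)
    hence "integral {0..c} (\<lambda>y. f (Complex a y)) = -\<i> * contour_integral (linepath A D) f"
      by (rule integral_unique)
    moreover have "contour_integral (linepath D A) f = - contour_integral (linepath A D) f"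
      by (metis contour_integral_reversepath reversepath_linepath valid_path_linepath)
    ultimately show ?thesis by simp
  qed
  moreover have "contour_integral (linepath C D) f = - integral {a..b} (\<lambda>t. f (Complex t c))"
  proof -
    have "linepath D C = (+) (\<i> * of_real c) \<circ> linepath (of_real a) (of_real b)"
      by (auto simp: linepath_def D_def C_def fun_eq_iff complex_eq_iff algebra_simps)
    hence "contour_integral (linepath D C) f = contour_integral (linepath (of_real a) (of_real b)) (\<lambda>x. f (x + \<i> * of_real c))"
      by (simp add: contour_integral_translate)
    also have "\<dots> = integral {a..b} (\<lambda>t. f (of_real t + \<i> * of_real c))"
      using ab by (subst contour_integral_linepath_Reals_eq) auto
    also have "(\<lambda>t. f (of_real t + \<i> * of_real c)) = (\<lambda>t. f (Complex t c))"
      by (intro ext arg_cong[where f=f]) (simp add: complex_eq_iff)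
    finally have "contour_integral (linepath D C) f = integral {a..b} (\<lambda>t. f (Complex t c))" .
    moreover have "contour_integral (linepath C D) f = - contour_integral (linepath D C) f"
      by (metis contour_integral_reversepath reversepath_linepath valid_path_linepath)
    ultimately show ?thesis by simp
  qed
  ultimately show ?thesis by (simp add: algebra_simps)
qed

definition af :: "real \<Rightarrow> complex \<Rightarrow> complex" where
  "af y w = exp (\<i> * (w^3/3) + \<i> * of_real y * w)"

lemma af_hol: "af y holomorphic_on UNIV"
  unfolding af_def by (auto intro!: holomorphic_intros)

lemma norm_af: "norm (af y (Complex t e)) = exp (- e * (t^2 + y) + e^3/3)"
  unfolding af_def norm_exp_eq_Re
  apply (simp add: power3_eq_cube power2_eq_square algebra_simps)
  apply (simp add: field_simps)
  done

lemma af_real: "af y (of_real t) + af y (of_real (-t)) = of_real (2 * cos (t^3/3 + y*t))"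
proof -
  have key: "exp (\<i> * of_real X) + exp (- (\<i> * of_real X)) = of_real (2 * cos X)" for X :: real
    by (simp add: cos_of_real[symmetric] cos_exp_eq)
  have "af y (of_real t) = exp (\<i> * of_real (t^3/3 + y*t))"
    unfolding af_def by (simp add: algebra_simps)
  moreover have "af y (of_real (-t)) = exp (- (\<i> * of_real (t^3/3 + y*t)))"
    unfolding af_def by (simp add: algebra_simps power3_eq_cube)
  ultimately show ?thesis
    by (simp only: key)
qed

lemma exp_int_bound:
  fixes M c :: real
  assumes M: "M > 0" and c: "c \<ge> 0"
  shows "(\<lambda>e. exp (- e * M)) integrable_on {0..c}" "integral {0..c} (\<lambda>e. exp (- e * M)) \<le> 1 / M"
proof -
  have "((\<lambda>e. exp (- e * M)) has_integral ((- exp (- c * M) / M) - (- exp (- 0 * M) / M))) {0..c}"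
    using c M
    by (intro fundamental_theorem_of_calculus)
       (auto intro!: derivative_eq_intros simp: has_real_derivative_iff_has_vector_derivative[symmetric])
  thus "(\<lambda>e. exp (- e * M)) integrable_on {0..c}" by blast
  from \<open>((\<lambda>e. exp (- e * M)) has_integral _) _\<close>
  have "integral {0..c} (\<lambda>e. exp (- e * M)) = 1 / M - exp (- c * M) / M"
    by (simp add: integral_unique)
  also have "\<dots> \<le> 1 / M" using M by simp
  finally show "integral {0..c} (\<lambda>e. exp (- e * M)) \<le> 1 / M" .
qed

lemma cont_af_line: "continuous_on S (\<lambda>e. af y (Complex b e))"
proof -
  have "(\<lambda>e. af y (Complex b e)) = (\<lambda>e. af y (of_real b + \<i> * of_real e))"
    by (intro ext arg_cong[where f="af y"]) (simp add: complex_eq_iff)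
  thus ?thesis unfolding af_def by (auto intro!: continuous_intros)
qed

lemma cont_af_hline: "continuous_on S (\<lambda>t. af y (Complex t c))"
proof -
  have "(\<lambda>t. af y (Complex t c)) = (\<lambda>t. af y (of_real t + \<i> * of_real c))"
    by (intro ext arg_cong[where f="af y"]) (simp add: complex_eq_iff)
  thus ?thesis unfolding af_def by (auto intro!: continuous_intros)
qed

lemma vert_bound:
  fixes b y c :: real
  assumes c: "c > 0" and M: "b^2 + y - c^2/3 > 0"
  shows "norm (integral {0..c} (\<lambda>e. af y (Complex b e))) \<le> 1 / (b^2 + y - c^2/3)"
proof -
  define M where "M = b^2 + y - c^2/3"
  have "norm (integral {0..c} (\<lambda>e. af y (Complex b e))) \<le> integral {0..c} (\<lambda>e. exp (- e * M))"
  proof (rule integral_norm_bound_integral)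
    show "(\<lambda>e. af y (Complex b e)) integrable_on {0..c}"
      by (rule integrable_continuous_interval) (rule cont_af_line)
    show "(\<lambda>e. exp (- e * M)) integrable_on {0..c}"
      using exp_int_bound[of M c] M c by (simp add: M_def)
    fix e assume e: "e \<in> {0..c}"
    have "e^2 \<le> c^2" using e by (intro power_mono) auto
    hence "e * e^2 \<le> e * c^2" using e by (intro mult_left_mono) auto
    hence "- e * (b^2 + y) + e^3/3 \<le> - e * M"
      by (simp add: M_def algebra_simps power3_eq_cube power2_eq_square)
    thus "norm (af y (Complex b e)) \<le> exp (- e * M)" by (simp add: norm_af)
  qed
  also have "\<dots> \<le> 1 / M" using exp_int_bound[of M c] M c by (simp add: M_def)
  finally show ?thesis by (simp add: M_def)
qed

lemma gauss_integrable: "a > 0 \<Longrightarrow> integrable lborel (\<lambda>t::real. exp (- a * t^2))"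
proof -
  assume a: "a > 0"
  define \<sigma> where "\<sigma> = sqrt (1/(2*a))"
  have s2: "\<sigma>^2 = 1/(2*a)" using a by (simp add: \<sigma>_def)
  have sp: "\<sigma> > 0" using a by (simp add: \<sigma>_def)
  have "integrable lborel (\<lambda>t. sqrt (pi / a) * normal_density 0 \<sigma> t)"
    using sp by (auto intro!: integrable_mult_right integrable_normal_density)
  moreover have "normal_density 0 \<sigma> t = exp (- a * t^2) / sqrt (pi / a)" for t
    unfolding normal_density_def s2 using a sp by (simp add: field_simps)
  moreover have "sqrt (pi / a) > 0" using a by simp
  ultimately show ?thesis using sp a by simp
qed

lemma af_line_integrable:
  assumes c: "c > 0"
  shows "integrable lborel (\<lambda>t. af y (Complex t c))"
proof (rule Bochner_Integration.integrable_bound[where f="\<lambda>t. exp (c^3/3 - c*y) * exp (- c * t^2)"])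
  show "integrable lborel (\<lambda>t. exp (c^3/3 - c*y) * exp (- c * t^2))"
    using gauss_integrable[of c] c by (intro integrable_mult_right) auto
  show "(\<lambda>t. af y (Complex t c)) \<in> borel_measurable lborel"
    using cont_af_hline[of UNIV y c] by (simp add: borel_measurable_continuous_onI)
  show "AE t in lborel. norm (af y (Complex t c)) \<le> norm (exp (c^3/3 - c*y) * exp (- c * t^2))"
    by (simp add: norm_af mult_exp_exp algebra_simps)
qed

lemma airy_rep:
  assumes c: "c > 0"
  shows "Airy y = Re (LINT t|lborel. af y (Complex t c)) / (2*pi)"
proof -
  define g where "g t = af y (Complex t c)" for t
  define I where "I = (LINT t|lborel. g t)"
  have gint: "integrable lborel g" unfolding g_def using af_line_integrable[OF c] .
  have gcont: "continuous_on S g" for S unfolding g_def by (rule cont_af_hline)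
  have fcont: "continuous_on S (\<lambda>t. af y (of_real t))" for S
    unfolding af_def by (auto intro!: continuous_intros)
  have lim2: "((\<lambda>b. integral {-b..b} g) \<longlongrightarrow> I) at_top"
  proof -
    have "((\<lambda>b. LINT t|lborel. indicator {-b..b} t *\<^sub>R g t) \<longlongrightarrow> LINT t|lborel. g t) at_top"
    proof (rule integral_dominated_convergence_at_top[where w="\<lambda>t. norm (g t)"])
      show "g \<in> borel_measurable lborel" using gint by auto
      show "(\<lambda>t. indicator {-b..b} t *\<^sub>R g t) \<in> borel_measurable lborel" for b
        using gint by (intro borel_measurable_integrable integrable_mult_indicator) auto
      show "integrable lborel (\<lambda>t. norm (g t))" using gint by auto
      show "AE t in lborel. ((\<lambda>b. indicator {-b..b} t *\<^sub>R g t) \<longlongrightarrow> g t) at_top"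
      proof (rule AE_I2, rule tendsto_eventually)
        fix t :: real
        show "\<forall>\<^sub>F b in at_top. indicator {-b..b} t *\<^sub>R g t = g t"
          using eventually_ge_at_top[of "\<bar>t\<bar>"] by eventually_elim (auto simp: indicator_def)
      qed
      show "\<forall>\<^sub>F b in at_top. AE t in lborel. norm (indicator {-b..b} t *\<^sub>R g t) \<le> norm (g t)"
        by (auto simp: indicator_def)
    qed
    moreover have "(LINT t|lborel. indicator {-b..b} t *\<^sub>R g t) = integral {-b..b} g" for b
    proof -
      have "set_integrable lborel {-b..b} g"
        unfolding set_integrable_def using gint by (intro integrable_mult_indicator) auto
      from set_borel_integral_eq_integral(2)[OF this] show ?thesis
        by (simp add: set_lebesgue_integral_def)
    qed
    ultimately show ?thesis by (simp add: I_def)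
  qed
  have vert0: "((\<lambda>b. integral {0..c} (\<lambda>e. af y (Complex (h b) e))) \<longlongrightarrow> 0) at_top"
    if hb: "\<And>b. (h b)^2 = b^2" for h :: "real \<Rightarrow> real"
  proof (rule Lim_null_comparison)
    have ev: "\<forall>\<^sub>F b in at_top. b^2 + y - c^2/3 > 0" by real_asymp
    show "\<forall>\<^sub>F b in at_top. norm (integral {0..c} (\<lambda>e. af y (Complex (h b) e))) \<le> 1 / (b^2 + y - c^2/3)"
      using ev
    proof eventually_elim
      case (elim b)
      thus ?case using vert_bound[OF c, of "h b" y] by (simp add: hb)
    qed
    show "((\<lambda>b. 1 / (b^2 + y - c^2/3)) \<longlongrightarrow> 0) at_top" by real_asymp
  qed
  have vA: "((\<lambda>b. integral {0..c} (\<lambda>e. af y (Complex (-b) e))) \<longlongrightarrow> 0) at_top"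
    using vert0[of uminus] by simp
  have vB: "((\<lambda>b. integral {0..c} (\<lambda>e. af y (Complex b e))) \<longlongrightarrow> 0) at_top"
    using vert0[of "\<lambda>b. b"] by simp
  define F where "F b = integral {-b..b} (\<lambda>t. af y (of_real t))" for b
  define V where "V s = integral {0..c} (\<lambda>e. af y (Complex s e))" for s
  have eq: "(1/pi) * integral {0..b} (\<lambda>t. cos (t^3/3 + y*t)) =
      Re (integral {-b..b} g + (\<i> * V (-b) - \<i> * V b)) / (2*pi)" if b: "b > 0" for b
  proof -
    let ?f = "\<lambda>t. af y (of_real t)"
    have fi: "?f integrable_on {p..q}" for p q by (rule integrable_continuous_interval) (rule fcont)
    have fi2: "(\<lambda>t. ?f (-t)) integrable_on {p..q}" for p q
      by (rule integrable_continuous_interval) (auto intro!: continuous_intros simp: af_def)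
    have "F b = integral {-b..0} ?f + integral {0..b} ?f"
      unfolding F_def using b Henstock_Kurzweil_Integration.integral_combine[where a="-b" and c=0 and b=b and f="?f"] fi by simp
    also have "integral {-b..0} ?f = integral {0..b} (\<lambda>t. ?f (-t))"
      using Henstock_Kurzweil_Integration.integral_reflect_real[of b 0 "\<lambda>t. ?f (-t)"] by simp
    finally have "F b = integral {0..b} (\<lambda>t. ?f t + ?f (-t))"
      using fi fi2 by (simp add: integral_add add.commute)
    hence "((\<lambda>t. ?f t + ?f (-t)) has_integral F b) {0..b}"
      using fi fi2 by (metis has_integral_integral integrable_add)
    hence "((\<lambda>t. Re (?f t + ?f (-t))) has_integral Re (F b)) {0..b}"
      by (rule has_integral_Re)
    hence "((\<lambda>t. 2 * cos (t^3/3 + y*t)) has_integral Re (F b)) {0..b}"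
      by (simp only: af_real Re_complex_of_real)
    hence "((\<lambda>t. cos (t^3/3 + y*t)) has_integral Re (F b) / 2) {0..b}"
      using has_integral_mult_right[of "\<lambda>t. 2 * cos (t^3/3 + y*t)" "Re (F b)" "{0..b}" "1/2"] by simp
    hence "integral {0..b} (\<lambda>t. cos (t^3/3 + y*t)) = Re (F b) / 2" by (rule integral_unique)
    moreover have "F b = integral {-b..b} g + (\<i> * V (-b) - \<i> * V b)"
      using rect_cauchy[OF af_hol, of "-b" b c y] b c unfolding F_def V_def g_def by (simp add: algebra_simps)
    ultimately show ?thesis by (simp add: field_simps)
  qed
  have lim: "((\<lambda>b. Re (integral {-b..b} g + (\<i> * V (-b) - \<i> * V b)) / (2*pi)) \<longlongrightarrow> Re (I + (\<i> * 0 - \<i> * 0)) / (2*pi)) at_top"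
    unfolding V_def by (intro tendsto_intros lim2 vA vB) auto
  have "((\<lambda>b. (1/pi) * integral {0..b} (\<lambda>t. cos (t^3/3 + y*t))) \<longlongrightarrow> Re I / (2*pi)) at_top"
  proof (rule Lim_transform_eventually)
    show "((\<lambda>b. Re (integral {-b..b} g + (\<i> * V (-b) - \<i> * V b)) / (2*pi)) \<longlongrightarrow> Re I / (2*pi)) at_top"
      using lim by simp
    show "\<forall>\<^sub>F b in at_top. Re (integral {-b..b} g + (\<i> * V (-b) - \<i> * V b)) / (2*pi) = (1/pi) * integral {0..b} (\<lambda>t. cos (t^3/3 + y*t))"
      using eventually_gt_at_top[of 0] by eventually_elim (simp only: eq)
  qed
  hence "Airy y = Re I / (2*pi)"
    unfolding Airy_def by (intro tendsto_Lim) auto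
  thus ?thesis by (simp add: I_def g_def)
qed

lemma Re_complex_of_real_mult: "Re (complex_of_real r * z) = r * Re z" by simp

definition kern :: "real \<Rightarrow> real \<Rightarrow> complex \<Rightarrow> complex" where
  "kern s x z = exp (\<i> * (z^3/3) - of_real s * z^2 + \<i> * of_real x * z)"

lemma af_kern: "af (s^2 + x) (w + \<i> * of_real s) = exp (of_real (- (2 * s^3 / 3 + x * s))) * kern s x w"
proof -
  have ii: "\<i> * \<i> = (-1::complex)" by simp
  have "\<i> * ((w + \<i> * of_real s)^3/3) + \<i> * of_real (s^2 + x) * (w + \<i> * of_real s) =
        of_real (- (2 * s^3 / 3 + x * s)) + (\<i> * (w^3/3) - of_real s * w^2 + \<i> * of_real x * w)"
    apply (simp add: power3_eq_cube power2_eq_square algebra_simps)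
    apply (simp add: field_simps)
    done
  thus ?thesis unfolding af_def kern_def by (simp add: mult_exp_exp)
qed

lemma norm_kern: "norm (kern s x (Complex k d)) = exp (- (d + s) * k^2 + d^3/3 + s * d^2 - x * d)"
  unfolding kern_def norm_exp_eq_Re
  apply (simp add: power3_eq_cube power2_eq_square algebra_simps)
  apply (simp add: field_simps)
  done

lemma shift_rep:
  assumes ds: "d + s > 0"
  shows "Airy_shift s x = Re (LINT k|lborel. kern s x (Complex k d)) / (2*pi)"
proof -
  have "Airy (s^2 + x) = Re (LINT k|lborel. af (s^2+x) (Complex k (d + s))) / (2*pi)"
    by (rule airy_rep[OF ds])
  also have "(\<lambda>k. af (s^2+x) (Complex k (d + s))) = (\<lambda>k. exp (of_real (- (2 * s^3 / 3 + x * s))) * kern s x (Complex k d))"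
  proof
    fix k
    have "Complex k (d + s) = Complex k d + \<i> * of_real s" by (simp add: complex_eq_iff)
    thus "af (s^2+x) (Complex k (d + s)) = exp (of_real (- (2 * s^3 / 3 + x * s))) * kern s x (Complex k d)"
      by (simp only: af_kern)
  qed
  also have "(LINT k|lborel. exp (of_real (- (2 * s^3 / 3 + x * s))) * kern s x (Complex k d)) =
      exp (of_real (- (2 * s^3 / 3 + x * s))) * (LINT k|lborel. kern s x (Complex k d))"
    by (rule integral_mult_right_zero)
  finally have "Airy (s^2 + x) = Re (of_real (exp (- (2 * s^3 / 3 + x * s))) * (LINT k|lborel. kern s x (Complex k d))) / (2*pi)"
    by (simp only: exp_of_real)
  also have "Re (of_real (exp (- (2 * s^3 / 3 + x * s))) * (LINT k|lborel. kern s x (Complex k d))) = exp (- (2 * s^3 / 3 + x * s)) * Re (LINT k|lborel. kern s x (Complex k d))"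
    by (rule Re_complex_of_real_mult)
  finally have "Airy (s^2 + x) = exp (- (2 * s^3 / 3 + x * s)) * Re (LINT k|lborel. kern s x (Complex k d)) / (2*pi)" .
  hence "exp (2 * s^3 / 3 + x * s) * Airy (s^2 + x) = Re (LINT k|lborel. kern s x (Complex k d)) / (2*pi)"
    by (simp add: exp_minus field_simps)
  thus ?thesis unfolding Airy_shift_def by simp
qed

lemma kern_integrable:
  assumes ds: "d + s > 0"
  shows "integrable lborel (\<lambda>k. kern s x (Complex k d))"
proof (rule Bochner_Integration.integrable_bound[where f="\<lambda>k. exp (d^3/3 + s * d^2 - x * d) * exp (- (d + s) * k^2)"])
  show "integrable lborel (\<lambda>k. exp (d^3/3 + s * d^2 - x * d) * exp (- (d + s) * k^2))"
    using gauss_integrable[of "d+s"] ds by (intro integrable_mult_right) auto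
  have "continuous_on UNIV (\<lambda>k. kern s x (Complex k d))"
  proof -
    have "(\<lambda>k. kern s x (Complex k d)) = (\<lambda>k. kern s x (of_real k + \<i> * of_real d))"
      by (intro ext arg_cong[where f="kern s x"]) (simp add: complex_eq_iff)
    thus ?thesis unfolding kern_def by (auto intro!: continuous_intros)
  qed
  thus "(\<lambda>k. kern s x (Complex k d)) \<in> borel_measurable lborel"
    by (simp add: borel_measurable_continuous_onI)
  show "AE k in lborel. norm (kern s x (Complex k d)) \<le> norm (exp (d^3/3 + s * d^2 - x * d) * exp (- (d + s) * k^2))"
    by (simp add: norm_kern mult_exp_exp algebra_simps)
qed


lemma heat_normal: "\<tau> > 0 \<Longrightarrow> heat \<tau> y m = normal_density m (sqrt (2*\<tau>)) y"
  unfolding heat_def normal_density_def by (simp add: field_simps real_sqrt_mult)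

lemma std_char:
  "(LINT w|lborel. complex_of_real (std_normal_density w) * exp (\<i> * complex_of_real (t * w))) = complex_of_real (exp (- (t^2) / 2))"
proof -
  have "char std_normal_distribution t = complex_of_real (exp (- (t^2) / 2))"
    by (simp add: char_std_normal_distribution)
  moreover have "char std_normal_distribution t = (LINT w|lborel. std_normal_density w *\<^sub>R exp (\<i> * complex_of_real (t * w)))"
    unfolding char_def by (subst integral_density) (auto simp: normal_density_nonneg)
  ultimately show ?thesis by (simp add: scaleR_conv_of_real)
qed

lemma std_char_integrable:
  "integrable lborel (\<lambda>w. complex_of_real (std_normal_density w) * exp (\<i> * complex_of_real (t * w)))"
proof (rule Bochner_Integration.integrable_bound[where f="std_normal_density"])
  show "integrable lborel std_normal_density" by simp
  show "(\<lambda>w. complex_of_real (std_normal_density w) * exp (\<i> * complex_of_real (t * w))) \<in> borel_measurable lborel"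
    by measurable
  show "AE w in lborel. norm (complex_of_real (std_normal_density w) * exp (\<i> * complex_of_real (t * w))) \<le> norm (std_normal_density w)"
    by (simp add: norm_mult normal_density_nonneg)
qed

lemma heat_transform:
  fixes k d x \<tau> :: real
  assumes tau: "\<tau> > 0"
  defines "z \<equiv> Complex k d"
  shows "integrable lborel (\<lambda>y. complex_of_real (heat \<tau> y x) * exp (\<i> * of_real y * z))"
    "(LINT y|lborel. complex_of_real (heat \<tau> y x) * exp (\<i> * of_real y * z)) = exp (\<i> * of_real x * z - of_real \<tau> * z^2)"
proof -
  define \<sigma> where "\<sigma> = sqrt (2*\<tau>)"
  define m where "m = x - 2*\<tau>*d"
  define C where "C = exp (\<i> * of_real x * z - of_real \<tau> * z^2 + of_real (\<tau> * k^2))"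
  have sp: "\<sigma> > 0" using tau by (simp add: \<sigma>_def)
  have s2: "\<sigma>^2 = 2*\<tau>" using tau by (simp add: \<sigma>_def)
  define h where "h y = complex_of_real (heat \<tau> y x) * exp (\<i> * of_real y * z)" for y
  define G where "G w = complex_of_real (std_normal_density w) * exp (\<i> * complex_of_real ((\<sigma>*k) * w))" for w
  have z: "z = of_real k + \<i> * of_real d" by (simp add: z_def complex_eq_iff)
  have pt: "h (m + \<sigma> * w) = (C / of_real \<sigma>) * G w" for w
  proof -
    have r1: "- ((m + \<sigma>*w - x)^2) / (4*\<tau>) = - (w^2)/2 + d*\<sigma>*w - \<tau>*d^2"
    proof -
      have "(m + \<sigma>*w - x)^2 = \<sigma>^2 * w^2 - 4*\<tau>*d*\<sigma>*w + 4*\<tau>^2*d^2"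
        by (simp add: m_def power2_eq_square algebra_simps)
      also have "\<dots> = 2*\<tau>*w^2 - 4*\<tau>*d*\<sigma>*w + 4*\<tau>^2*d^2" by (simp add: s2)
      finally show ?thesis using tau by (simp add: field_simps power2_eq_square)
    qed
    have sq: "sqrt (4 * pi * \<tau>) = \<sigma> * sqrt (2*pi)"
      using tau by (simp add: \<sigma>_def real_sqrt_mult[symmetric])
    have e1: "complex_of_real (- (w^2)/2 + d*\<sigma>*w - \<tau>*d^2) + \<i> * of_real (m + \<sigma> * w) * z =
        (\<i> * of_real x * z - of_real \<tau> * z^2 + of_real (\<tau> * k^2)) + (complex_of_real (- (w^2)/2) + \<i> * complex_of_real ((\<sigma>*k) * w))"
      unfolding z m_def
      by (simp add: power2_eq_square algebra_simps)
    have "h (m + \<sigma> * w) = complex_of_real (exp (- ((m + \<sigma>*w - x)^2) / (4*\<tau>))) / of_real (sqrt (4*pi*\<tau>)) * exp (\<i> * of_real (m + \<sigma> * w) * z)"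
      unfolding h_def heat_def by simp
    also have "complex_of_real (exp (- ((m + \<sigma>*w - x)^2) / (4*\<tau>))) = exp (complex_of_real (- (w^2)/2 + d*\<sigma>*w - \<tau>*d^2))"
      by (simp only: r1 exp_of_real)
    also have "of_real (sqrt (4*pi*\<tau>)) = (of_real \<sigma> * of_real (sqrt (2*pi)) :: complex)"
      by (simp only: sq of_real_mult)
    also have "exp (complex_of_real (- (w^2)/2 + d*\<sigma>*w - \<tau>*d^2)) / (of_real \<sigma> * of_real (sqrt (2*pi))) * exp (\<i> * of_real (m + \<sigma> * w) * z)
       = exp (complex_of_real (- (w^2)/2 + d*\<sigma>*w - \<tau>*d^2) + \<i> * of_real (m + \<sigma> * w) * z) / (of_real \<sigma> * of_real (sqrt (2*pi)))"
      by (simp only: exp_add) simp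
    also have "\<dots> = C * (exp (complex_of_real (- (w^2)/2)) * exp (\<i> * complex_of_real ((\<sigma>*k) * w))) / (of_real \<sigma> * of_real (sqrt (2*pi)))"
      by (simp only: e1 exp_add C_def)
    also have "\<dots> = (C / of_real \<sigma>) * G w"
      unfolding G_def normal_density_def by (simp add: exp_of_real[symmetric] field_simps)
    finally show ?thesis .
  qed
  have Gi: "integrable lborel G" unfolding G_def by (rule std_char_integrable)
  have hi: "integrable lborel (\<lambda>w. h (m + \<sigma> * w))"
    unfolding pt using Gi by (intro integrable_mult_right)
  thus "integrable lborel (\<lambda>y. complex_of_real (heat \<tau> y x) * exp (\<i> * of_real y * z))"
  proof -
    have "integrable lborel h" using lborel_integrable_real_affine_iff[of \<sigma> h m] sp hi by simp
    thus ?thesis by (simp add: h_def[abs_def])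
  qed
  have "(LINT y|lborel. h y) = \<bar>\<sigma>\<bar> *\<^sub>R (LINT w|lborel. h (m + \<sigma> * w))"
    using sp by (intro lborel_integral_real_affine) simp
  also have "\<dots> = of_real \<sigma> * ((C / of_real \<sigma>) * (LINT w|lborel. G w))"
    using sp by (simp add: pt scaleR_conv_of_real)
  also have "(LINT w|lborel. G w) = complex_of_real (exp (- ((\<sigma>*k)^2) / 2))"
    unfolding G_def by (rule std_char)
  also have "of_real \<sigma> * ((C / of_real \<sigma>) * complex_of_real (exp (- ((\<sigma>*k)^2) / 2))) = C * exp (- of_real (\<tau> * k^2))"
    using sp by (simp add: power_mult_distrib s2 exp_of_real[symmetric])
  also have "\<dots> = exp (\<i> * of_real x * z - of_real \<tau> * z^2)"
    unfolding C_def by (simp add: exp_add[symmetric])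
  finally show "(LINT y|lborel. complex_of_real (heat \<tau> y x) * exp (\<i> * of_real y * z)) = exp (\<i> * of_real x * z - of_real \<tau> * z^2)"
    by (simp add: h_def)
qed


lemma heat_nonneg: "\<tau> > 0 \<Longrightarrow> heat \<tau> y x \<ge> 0"
  unfolding heat_def by simp

lemma conv:
  fixes \<tau> s x :: real
  assumes tau: "\<tau> > 0"
  shows "integrable lborel (\<lambda>y. heat \<tau> y x * Airy_shift s y)"
    "(LINT y|lborel. heat \<tau> y x * Airy_shift s y) = Airy_shift (s + \<tau>) x"
proof -
  define d where "d = \<bar>s\<bar> + 1"
  have ds: "d + s > 0" unfolding d_def by linarith
  have dst: "d + (s + \<tau>) > 0" using ds tau by simp
  define Z where "Z k = Complex k d" for k
  define Q where "Q k = exp (\<i> * ((Z k)^3/3) - of_real s * (Z k)^2)" for k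
  define F where "F y k = complex_of_real (heat \<tau> y x) * kern s y (Z k)" for y k
  have Zeq: "Z k = of_real k + \<i> * of_real d" for k by (simp add: Z_def complex_eq_iff)
  have kQ: "kern s y (Z k) = Q k * exp (\<i> * of_real y * Z k)" for y k
    unfolding kern_def Q_def by (simp add: exp_add[symmetric])
  have Qi: "integrable lborel Q"
  proof -
    have "integrable lborel (\<lambda>k. kern s 0 (Z k))" unfolding Z_def by (rule kern_integrable[OF ds])
    thus ?thesis by (simp add: kQ)
  qed
  have nE: "norm (exp (\<i> * of_real y * Z k)) = exp (- (y * d))" for y k
    by (simp add: Z_def norm_exp_eq_Re)
  have hE: "integrable lborel (\<lambda>y. heat \<tau> y x * exp (- (y * d)))"
  proof -
    have "integrable lborel (\<lambda>y. norm (complex_of_real (heat \<tau> y x) * exp (\<i> * of_real y * Complex 0 d)))"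
      using heat_transform(1)[OF tau, of x 0 d] by (rule integrable_norm)
    moreover have "norm (complex_of_real (heat \<tau> y x) * exp (\<i> * of_real y * Complex 0 d)) = heat \<tau> y x * exp (- (y * d))" for y
      using nE[of y 0, unfolded Z_def] heat_nonneg[OF tau, of y x] by (simp add: norm_mult)
    ultimately show ?thesis by simp
  qed
  have Fi: "integrable (lborel \<Otimes>\<^sub>M lborel) (\<lambda>(y, k). F y k)"
  proof -
    have "continuous_on UNIV (\<lambda>p::real\<times>real. F (fst p) (snd p))"
      unfolding F_def kern_def Zeq heat_def using tau by (auto intro!: continuous_intros)
    hence "(\<lambda>p::real\<times>real. F (fst p) (snd p)) \<in> borel_measurable borel"
      by (rule borel_measurable_continuous_onI)
    hence m: "(\<lambda>(y, k). F y k) \<in> borel_measurable (lborel \<Otimes>\<^sub>M lborel)"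
      by (simp add: lborel_prod case_prod_beta')
    have "(\<lambda>y. LINT k|lborel. norm (F y k)) = (\<lambda>y. (heat \<tau> y x * exp (- (y * d))) * (LINT k|lborel. norm (Q k)))"
    proof
      fix y
      have "norm (F y k) = (heat \<tau> y x * exp (- (y * d))) * norm (Q k)" for k
        unfolding F_def kQ using heat_nonneg[OF tau, of y x] by (simp add: norm_mult nE Z_def)
      thus "(LINT k|lborel. norm (F y k)) = (heat \<tau> y x * exp (- (y * d))) * (LINT k|lborel. norm (Q k))"
        by simp
    qed
    hence i1: "integrable lborel (\<lambda>y. LINT k|lborel. norm (F y k))"
      using hE by (simp add: integrable_mult_left)
    have i2: "AE y in lborel. integrable lborel (\<lambda>k. F y k)"
      unfolding F_def Z_def using kern_integrable[OF ds] by (auto intro!: integrable_mult_right)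
    show ?thesis
      by (rule lborel_pair.Fubini_integrable[OF m]) (use i1 i2 in auto)
  qed
  define K where "K y = (LINT k|lborel. kern s y (Z k))" for y
  have inner_k: "(LINT k|lborel. F y k) = complex_of_real (heat \<tau> y x) * K y" for y
    unfolding F_def K_def by (rule integral_mult_right_zero)
  have inner_y: "(LINT y|lborel. F y k) = kern (s + \<tau>) x (Z k)" for k
  proof -
    have "(LINT y|lborel. F y k) = Q k * (LINT y|lborel. complex_of_real (heat \<tau> y x) * exp (\<i> * of_real y * Z k))"
      unfolding F_def kQ by (simp add: mult.left_commute)
    also have "\<dots> = Q k * exp (\<i> * of_real x * Z k - of_real \<tau> * (Z k)^2)"
      unfolding Z_def by (simp only: heat_transform(2)[OF tau])
    also have "\<dots> = kern (s + \<tau>) x (Z k)"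
      unfolding Q_def kern_def by (simp add: exp_add[symmetric] algebra_simps)
    finally show ?thesis .
  qed
  have fst_i: "integrable lborel (\<lambda>y. LINT k|lborel. F y k)"
    using lborel_pair.integrable_fst'[OF Fi] by simp
  have AS: "Airy_shift s y = Re (K y) / (2*pi)" for y
    unfolding K_def Z_def by (rule shift_rep[OF ds])
  have eqf: "heat \<tau> y x * Airy_shift s y = Re (LINT k|lborel. F y k) / (2*pi)" for y
    by (simp add: inner_k AS Re_complex_of_real_mult)
  show "integrable lborel (\<lambda>y. heat \<tau> y x * Airy_shift s y)"
    unfolding eqf using fst_i by (intro integrable_divide integrable_Re)
  have "(LINT y|lborel. heat \<tau> y x * Airy_shift s y) = Re (LINT y|lborel. LINT k|lborel. F y k) / (2*pi)"
    unfolding eqf using fst_i by (simp add: integral_bounded_linear[OF bounded_linear_Re])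
  also have "(LINT y|lborel. LINT k|lborel. F y k) = (LINT k|lborel. LINT y|lborel. F y k)"
    using lborel_pair.Fubini_integral[OF Fi] by simp
  also have "\<dots> = (LINT k|lborel. kern (s + \<tau>) x (Z k))" by (simp add: inner_y)
  also have "Re \<dots> / (2*pi) = Airy_shift (s + \<tau>) x"
    unfolding Z_def by (rule shift_rep[OF dst, symmetric])
  finally show "(LINT y|lborel. heat \<tau> y x * Airy_shift s y) = Airy_shift (s + \<tau>) x" .
qed


lemma heat_sym: "heat \<tau> x y = heat \<tau> y x"
  unfolding heat_def by (simp add: power2_commute)

lemma heat_neg: "heat \<tau> x (-y) = heat \<tau> (-x) y"
  unfolding heat_def by (simp add: power2_eq_square algebra_simps)

lemma heat_shift: "heat \<tau> w q = heat \<tau> (a + w) (a + q)" "heat \<tau> w q = heat \<tau> (a - w) (a - q)"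
  unfolding heat_def by (simp_all add: power2_eq_square algebra_simps)

lemma odd_part:
  fixes A B :: "real \<Rightarrow> real" and \<tau> a q :: real
  assumes Ai: "\<And>p. integrable lborel (\<lambda>y. heat \<tau> y p * A y)"
    and AB: "\<And>p. (LINT y|lborel. heat \<tau> y p * A y) = B p"
  shows "(LINT w:{..0}|lborel. (A (a + w) - A (a - w)) * (heat \<tau> w q - heat \<tau> (-w) q)) = B (a + q) - B (a - q)"
proof -
  define g where "g w = A (a + w) - A (a - w)" for w
  define P where "P w = g w * heat \<tau> w q" for w
  have P1: "integrable lborel (\<lambda>w. heat \<tau> (a + 1 * w) (a + q) * A (a + 1 * w))"
    using lborel_integrable_real_affine_iff[of 1 "\<lambda>y. heat \<tau> y (a + q) * A y" a] Ai by simp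
  have P2: "integrable lborel (\<lambda>w. heat \<tau> (a + (-1) * w) (a - q) * A (a + (-1) * w))"
    using lborel_integrable_real_affine_iff[of "-1" "\<lambda>y. heat \<tau> y (a - q) * A y" a] Ai by simp
  have I1: "(LINT w|lborel. heat \<tau> (a + 1 * w) (a + q) * A (a + 1 * w)) = B (a + q)"
    using lborel_integral_real_affine[of 1 "\<lambda>y. heat \<tau> y (a + q) * A y" a] AB by simp
  have I2: "(LINT w|lborel. heat \<tau> (a + (-1) * w) (a - q) * A (a + (-1) * w)) = B (a - q)"
    using lborel_integral_real_affine[of "-1" "\<lambda>y. heat \<tau> y (a - q) * A y" a] AB by simp
  have Peq: "P w = heat \<tau> (a + 1 * w) (a + q) * A (a + 1 * w) - heat \<tau> (a + (-1) * w) (a - q) * A (a + (-1) * w)" for w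
    unfolding P_def g_def using heat_shift[of \<tau> w q a] by (simp add: algebra_simps)
  have Pi: "integrable lborel P"
    unfolding Peq using P1 P2 by (rule Bochner_Integration.integrable_diff)
  have PI: "(LINT w|lborel. P w) = B (a + q) - B (a - q)"
    unfolding Peq using P1 P2 I1 I2 by simp
  have Pm: "integrable lborel (\<lambda>w. P (-w))"
    using lborel_integrable_real_affine_iff[of "-1" P 0] Pi by simp
  have L1: "integrable lborel (\<lambda>w. indicator {..0} w * P w)"
    using integrable_mult_indicator[of "{..0}" lborel P] Pi by simp
  have L2: "integrable lborel (\<lambda>w. indicator {..0} w * P (-w))"
    using integrable_mult_indicator[of "{..0}" lborel "\<lambda>w. P (-w)"] Pm by simp
  have L3: "integrable lborel (\<lambda>w. indicator {0..} w * P w)"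
    using integrable_mult_indicator[of "{0..}" lborel P] Pi by simp
  have neg: "g w * heat \<tau> (-w) q = - P (-w)" for w
    unfolding P_def g_def by (simp add: algebra_simps)
  have "(LINT w:{..0}|lborel. g w * (heat \<tau> w q - heat \<tau> (-w) q)) =
      (LINT w|lborel. indicator {..0} w * P w + indicator {..0} w * P (-w))"
    unfolding set_lebesgue_integral_def
    by (intro Bochner_Integration.integral_cong) (auto simp: neg P_def algebra_simps)
  also have "\<dots> = (LINT w|lborel. indicator {..0} w * P w) + (LINT w|lborel. indicator {..0} w * P (-w))"
    using L1 L2 by (rule Bochner_Integration.integral_add)
  also have "(LINT w|lborel. indicator {..0} w * P (-w)) = (LINT w|lborel. indicator {..0} (0 + (-1) * w) * P (- (0 + (-1) * w)))"
    using lborel_integral_real_affine[of "-1" "\<lambda>w. indicator {..0} w * P (-w)" 0] by simp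
  also have "\<dots> = (LINT w|lborel. indicator {0..} w * P w)"
    by (intro Bochner_Integration.integral_cong) (auto simp: indicator_def)
  also have "(LINT w|lborel. indicator {..0} w * P w) + (LINT w|lborel. indicator {0..} w * P w)
      = (LINT w|lborel. indicator {..0} w * P w + indicator {0..} w * P w)"
    using L1 L3 by (rule Bochner_Integration.integral_add[symmetric])
  also have "\<dots> = (LINT w|lborel. P w)"
    by (intro Bochner_Integration.integral_cong) (auto simp: indicator_def P_def g_def)
  finally show ?thesis using PI by (simp add: g_def)
qed

theorem proposition7p3:
  fixes R t1 t2 :: real
  assumes "t1 < t2"
  shows "\<forall>\<xi> \<zeta> u v. u \<le> 0 \<longrightarrow> v \<le> 0 \<longrightarrow>
      (LINT u':{..0}|lborel. Phi R t1 \<xi> u' * T0 t1 t2 u' v) = Phi R t2 \<xi> v \<and>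
      (LINT v':{..0}|lborel. T0 t1 t2 u v' * Psi R t2 \<zeta> v') = Psi R t1 \<zeta> u"
proof (intro allI impI conjI)
  fix \<xi> \<zeta> u v :: real
  define \<tau> where "\<tau> = t2 - t1"
  have tau: "\<tau> > 0" using assms by (simp add: \<tau>_def)
  show "(LINT u':{..0}|lborel. Phi R t1 \<xi> u' * T0 t1 t2 u' v) = Phi R t2 \<xi> v"
  proof -
    have "(LINT u':{..0}|lborel. Phi R t1 \<xi> u' * T0 t1 t2 u' v) =
      (LINT w:{..0}|lborel. (Airy_shift t1 ((R + \<xi>) + w) - Airy_shift t1 ((R + \<xi>) - w)) * (heat \<tau> w v - heat \<tau> (-w) v))"
    proof -
      have "Phi R t1 \<xi> w * T0 t1 t2 w v = (Airy_shift t1 ((R + \<xi>) + w) - Airy_shift t1 ((R + \<xi>) - w)) * (heat \<tau> w v - heat \<tau> (-w) v)" for w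
        unfolding Phi_def T0_def \<tau>_def by (simp add: heat_neg)
      thus ?thesis by simp
    qed
    also have "\<dots> = Airy_shift (t1 + \<tau>) ((R + \<xi>) + v) - Airy_shift (t1 + \<tau>) ((R + \<xi>) - v)"
      by (rule odd_part) (use conv[OF tau] in auto)
    also have "\<dots> = Phi R t2 \<xi> v"
      unfolding Phi_def \<tau>_def by (simp add: add.assoc diff_diff_eq2 diff_diff_eq)
    finally show ?thesis .
  qed
  show "(LINT v':{..0}|lborel. T0 t1 t2 u v' * Psi R t2 \<zeta> v') = Psi R t1 \<zeta> u"
  proof -
    have "(LINT v':{..0}|lborel. T0 t1 t2 u v' * Psi R t2 \<zeta> v') =
      (LINT w:{..0}|lborel. (Airy_shift (-t2) ((R + \<zeta>) + w) - Airy_shift (-t2) ((R + \<zeta>) - w)) * (heat \<tau> w u - heat \<tau> (-w) u))"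
    proof -
      have "T0 t1 t2 u w * Psi R t2 \<zeta> w = (Airy_shift (-t2) ((R + \<zeta>) + w) - Airy_shift (-t2) ((R + \<zeta>) - w)) * (heat \<tau> w u - heat \<tau> (-w) u)" for w
      proof -
        have "heat \<tau> u w = heat \<tau> w u" "heat \<tau> u (-w) = heat \<tau> (-w) u"
          unfolding heat_def by (simp_all add: power2_eq_square algebra_simps)
        thus ?thesis unfolding Psi_def T0_def \<tau>_def by simp
      qed
      thus ?thesis by simp
    qed
    also have "\<dots> = Airy_shift (-t2 + \<tau>) ((R + \<zeta>) + u) - Airy_shift (-t2 + \<tau>) ((R + \<zeta>) - u)"
      by (rule odd_part) (use conv[OF tau] in auto)
    also have "\<dots> = Psi R t1 \<zeta> u"
      unfolding Psi_def \<tau>_def by (simp add: add.assoc diff_diff_eq2 diff_diff_eq)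
    finally show ?thesis .
  qed
qed

end
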